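(* Let $X$ be a separable Hilbert space, $N\ge0$ an integer, and $F\subset H^2(\mathbb{D},X)$ a closed subspace. The following are equivalent: (i) there is an $X$-valued polynomial $p$ of degree $N$ with $F=E_p$; (ii) $\dim F=N+1$ and $F=H^2(\mathbb{D},X)\ominus\Theta H^2(\mathbb{D},X)$, where $$\Theta(z)=(P_{N+1}^\perp+zP_{N+1})(P_N^\perp+zP_N)\cdots(P_1^\perp+zP_1)$$ for some orthogonal projections $P_1,\dots,P_{N+1}$ on $X$ (with $P^\perp=I-P$), and $\dim\operatorname{Ker}\Theta(0)^*=1$.
   Context: $H^2(\mathbb{D},X)$: $X$-valued power series with square-summable coefficient norms; $S^*$ the backward shift; $E_p$ the closed linear span of $\{S^{*n}p:n\ge0\}$. $\Theta H^2(\mathbb{D},X)=\{\Theta g: g\in H^2(\mathbb{D},X)\}$, with $\Theta$ acting pointwise as an operator-valued function. *)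

theory Defs
  imports "HOL-Analysis.Analysis"
begin

text \<open>Together with the sort
complete_space this is a complex Hilbert space.\<close>

class complex_inner = real_normed_vector +
  fixes scaleC :: "complex \<Rightarrow> 'a \<Rightarrow> 'a" (infixr \<open>*\<^sub>C\<close> 75)
    and cinner :: "'a \<Rightarrow> 'a \<Rightarrow> complex"
  assumes scaleC_add_right: "a *\<^sub>C (x + y) = a *\<^sub>C x + a *\<^sub>C y"
    and scaleC_add_left: "(a + b) *\<^sub>C x = a *\<^sub>C x + b *\<^sub>C x"
    and scaleC_scaleC: "a *\<^sub>C (b *\<^sub>C x) = (a * b) *\<^sub>C x"
    and scaleC_one: "1 *\<^sub>C x = x"
    and scaleR_scaleC: "r *\<^sub>R x = complex_of_real r *\<^sub>C x"
    and cinner_commute: "cinner x y = cnj (cinner y x)"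
    and cinner_add_left: "cinner (x + y) z = cinner x z + cinner y z"
    and cinner_scaleC_left: "cinner (a *\<^sub>C x) y = a * cinner x y"
    and cinner_nonneg: "0 \<le> Re (cinner x x)"
    and cinner_eq_zero_iff: "cinner x x = 0 \<longleftrightarrow> x = 0"
    and norm_eq_sqrt_cinner: "norm x = sqrt (Re (cinner x x))"

definition separable_space_ax :: "'a::topological_space itself \<Rightarrow> bool" where
  "separable_space_ax _ \<longleftrightarrow> (\<exists>D::'a set. countable D \<and> closure D = UNIV)"

definition cspan :: "'a::complex_inner set \<Rightarrow> 'a set" where
  "cspan S = {x. \<exists>T c. finite T \<and> T \<subseteq> S \<and> x = (\<Sum>v\<in>T. c v *\<^sub>C v)}"

definition cindependent :: "'a::complex_inner set \<Rightarrow> bool" where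
  "cindependent S \<longleftrightarrow> (\<forall>T c. finite T \<and> T \<subseteq> S \<and> (\<Sum>v\<in>T. c v *\<^sub>C v) = 0 \<longrightarrow> (\<forall>v\<in>T. c v = 0))"

definition cdim_eq :: "'a::complex_inner set \<Rightarrow> nat \<Rightarrow> bool" where
  "cdim_eq V n \<longleftrightarrow> (\<exists>B. finite B \<and> card B = n \<and> B \<subseteq> V \<and> cindependent B \<and> cspan B = V)"

definition orth_proj :: "('a::complex_inner \<Rightarrow> 'a) \<Rightarrow> bool" where
  "orth_proj P \<longleftrightarrow> (\<forall>x y. P (x + y) = P x + P y) \<and> (\<forall>a x. P (a *\<^sub>C x) = a *\<^sub>C P x)
     \<and> (\<forall>x. P (P x) = P x) \<and> (\<forall>x y. cinner (P x) y = cinner x (P y))"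

definition adjoint :: "('a::complex_inner \<Rightarrow> 'a) \<Rightarrow> ('a \<Rightarrow> 'a)" where
  "adjoint T = (THE S. \<forall>x y. cinner (T x) y = cinner x (S y))"

section \<open>The Hardy space H^2(D,X), as sequences of Taylor coefficients\<close>

definition H2 :: "(nat \<Rightarrow> 'a::complex_inner) set" where
  "H2 = {f. summable (\<lambda>n. (norm (f n))\<^sup>2)}"

definition h2inner :: "(nat \<Rightarrow> 'a::complex_inner) \<Rightarrow> (nat \<Rightarrow> 'a) \<Rightarrow> complex" where
  "h2inner f g = (\<Sum>n. cinner (f n) (g n))"

definition h2norm :: "(nat \<Rightarrow> 'a::complex_inner) \<Rightarrow> real" where
  "h2norm f = sqrt (\<Sum>n. (norm (f n))\<^sup>2)"

definition h2_closure :: "(nat \<Rightarrow> 'a::complex_inner) set \<Rightarrow> (nat \<Rightarrow> 'a) set" where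
  "h2_closure A = {f \<in> H2. \<forall>e>0. \<exists>g\<in>A. h2norm (\<lambda>n. f n - g n) < e}"

definition h2_closed_subspace :: "(nat \<Rightarrow> 'a::complex_inner) set \<Rightarrow> bool" where
  "h2_closed_subspace F \<longleftrightarrow> F \<subseteq> H2 \<and> (\<lambda>n. 0) \<in> F
     \<and> (\<forall>f\<in>F. \<forall>g\<in>F. (\<lambda>n. f n + g n) \<in> F)
     \<and> (\<forall>a. \<forall>f\<in>F. (\<lambda>n. a *\<^sub>C f n) \<in> F)
     \<and> h2_closure F = F"

definition seq_cspan :: "(nat \<Rightarrow> 'a::complex_inner) set \<Rightarrow> (nat \<Rightarrow> 'a) set" where
  "seq_cspan S = {f. \<exists>T c. finite T \<and> T \<subseteq> S \<and> f = (\<lambda>n. \<Sum>v\<in>T. c v *\<^sub>C v n)}"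

definition seq_cindependent :: "(nat \<Rightarrow> 'a::complex_inner) set \<Rightarrow> bool" where
  "seq_cindependent S \<longleftrightarrow> (\<forall>T c. finite T \<and> T \<subseteq> S \<and> (\<forall>n. (\<Sum>v\<in>T. c v *\<^sub>C v n) = 0)
      \<longrightarrow> (\<forall>v\<in>T. c v = 0))"

definition seq_cdim_eq :: "(nat \<Rightarrow> 'a::complex_inner) set \<Rightarrow> nat \<Rightarrow> bool" where
  "seq_cdim_eq F n \<longleftrightarrow> (\<exists>B. finite B \<and> card B = n \<and> B \<subseteq> F \<and> seq_cindependent B \<and> seq_cspan B = F)"

definition bshift :: "(nat \<Rightarrow> 'a) \<Rightarrow> (nat \<Rightarrow> 'a)" where
  "bshift f = (\<lambda>n. f (Suc n))"

definition E :: "(nat \<Rightarrow> 'a::complex_inner) \<Rightarrow> (nat \<Rightarrow> 'a) set" where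
  "E p = h2_closure (seq_cspan {(bshift ^^ k) p | k. True})"

definition is_poly_deg :: "(nat \<Rightarrow> 'a::zero) \<Rightarrow> nat \<Rightarrow> bool" where
  "is_poly_deg p N \<longleftrightarrow> p N \<noteq> 0 \<and> (\<forall>n>N. p n = 0)"

text \<open>Multiplication on H^2 by the operator-valued function z \<mapsto> P^\<bottom> + z P
  (acting on Taylor coefficients).\<close>
definition mult_factor :: "('a::complex_inner \<Rightarrow> 'a) \<Rightarrow> (nat \<Rightarrow> 'a) \<Rightarrow> (nat \<Rightarrow> 'a)" where
  "mult_factor P g = (\<lambda>n. (g n - P (g n)) + (if n = 0 then 0 else P (g (n - 1))))"

text \<open>Multiplication by \<Theta>(z) = (P_{N+1}^\<bottom> + z P_{N+1}) \<dots> (P_1^\<bottom> + z P_1),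
  with the projections given as P 1, \<dots>, P (N+1).\<close>
definition Theta_mult :: "(nat \<Rightarrow> 'a::complex_inner \<Rightarrow> 'a) \<Rightarrow> nat \<Rightarrow> (nat \<Rightarrow> 'a) \<Rightarrow> (nat \<Rightarrow> 'a)" where
  "Theta_mult P N g = fold (\<lambda>k h. mult_factor (P k) h) [1..<N+2] g"

definition Theta0 :: "(nat \<Rightarrow> 'a::complex_inner \<Rightarrow> 'a) \<Rightarrow> nat \<Rightarrow> 'a \<Rightarrow> 'a" where
  "Theta0 P N x = fold (\<lambda>k y. y - P k y) [1..<N+2] x"

definition h2_orth_compl :: "(nat \<Rightarrow> 'a::complex_inner) set \<Rightarrow> (nat \<Rightarrow> 'a) set" where
  "h2_orth_compl M = {f \<in> H2. \<forall>g\<in>M. h2inner f g = 0}"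

end

theory Submission
  imports Defs "HOL-Library.Function_Algebras"
begin

lemma neg_from_sum: "(c::'b::ab_group_add) + d = 0 \<Longrightarrow> d = - c"
  by (simp add: eq_neg_iff_add_eq_0 add.commute)


lemma scaleC_zero_left[simp]: "0 *\<^sub>C x = 0"
proof -
  have "(0 + 0) *\<^sub>C x = 0 *\<^sub>C x + 0 *\<^sub>C x" by (rule scaleC_add_left)
  then show ?thesis by simp
qed

lemma scaleC_zero_right[simp]: "a *\<^sub>C 0 = 0"
proof -
  have "a *\<^sub>C (0 + 0) = a *\<^sub>C 0 + a *\<^sub>C 0" by (rule scaleC_add_right)
  then show ?thesis by simp
qed

lemma scaleC_minus_right: "a *\<^sub>C (- x) = - (a *\<^sub>C x)"
proof -
  have "a *\<^sub>C (x + - x) = a *\<^sub>C x + a *\<^sub>C (- x)" by (rule scaleC_add_right)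
  then have "a *\<^sub>C x + a *\<^sub>C (- x) = 0" by simp
  then show ?thesis by (rule neg_from_sum)
qed

lemma scaleC_minus_left: "(- a) *\<^sub>C x = - (a *\<^sub>C x)"
proof -
  have "(a + - a) *\<^sub>C x = a *\<^sub>C x + (- a) *\<^sub>C x" by (rule scaleC_add_left)
  then have "a *\<^sub>C x + (- a) *\<^sub>C x = 0" by simp
  then show ?thesis by (rule neg_from_sum)
qed

lemma scaleC_diff_right: "a *\<^sub>C (x - y) = a *\<^sub>C x - a *\<^sub>C y"
  using scaleC_add_right[of a x "- y"] by (simp add: scaleC_minus_right)

lemma scaleC_diff_left: "(a - b) *\<^sub>C x = a *\<^sub>C x - b *\<^sub>C x"
  using scaleC_add_left[of a "- b" x] by (simp add: scaleC_minus_left)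

lemma scaleC_eq_0_iff: "a *\<^sub>C x = 0 \<longleftrightarrow> a = 0 \<or> x = 0"
proof
  assume h: "a *\<^sub>C x = 0"
  show "a = 0 \<or> x = 0"
  proof (cases "a = 0")
    case False
    have "x = (inverse a * a) *\<^sub>C x" using False by (simp add: scaleC_one)
    also have "\<dots> = inverse a *\<^sub>C (a *\<^sub>C x)" by (simp add: scaleC_scaleC)
    also have "\<dots> = 0" using h by simp
    finally show ?thesis by simp
  qed simp
qed auto

lemma cinner_add_right: "cinner x (y + z) = cinner x y + cinner x z"
  by (metis cinner_commute cinner_add_left complex_cnj_add)

lemma cinner_scaleC_right: "cinner x (a *\<^sub>C y) = cnj a * cinner x y"
  by (metis cinner_commute cinner_scaleC_left complex_cnj_mult complex_cnj_cnj)

lemma cinner_zero_left[simp]: "cinner 0 y = 0"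
  using cinner_scaleC_left[of 0 0 y] by simp

lemma cinner_zero_right[simp]: "cinner x 0 = 0"
  using cinner_scaleC_right[of x 0 0] by simp

lemma cinner_minus_left: "cinner (- x) y = - (cinner x y)"
proof -
  have "cinner x y + cinner (- x) y = 0" using cinner_add_left[of x "- x" y] by simp
  then show ?thesis by (rule neg_from_sum)
qed

lemma cinner_minus_right: "cinner x (- y) = - (cinner x y)"
proof -
  have "cinner x y + cinner x (- y) = 0" using cinner_add_right[of x y "- y"] by simp
  then show ?thesis by (rule neg_from_sum)
qed

lemma cinner_diff_left: "cinner (x - y) z = cinner x z - cinner y z"
  using cinner_add_left[of x "- y" z] by (simp add: cinner_minus_left)

lemma cinner_diff_right: "cinner x (y - z) = cinner x y - cinner x z"
  using cinner_add_right[of x y "- z"] by (simp add: cinner_minus_right)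

lemma cinner_self_real: "cinner x x = complex_of_real (Re (cinner x x))"
proof -
  have "Im (cinner x x) = Im (cnj (cinner x x))" using cinner_commute[of x x] by simp
  then have "Im (cinner x x) = 0" by simp
  then show ?thesis by (simp add: complex_eq_iff)
qed

lemma Re_cinner_self: "Re (cinner x x) = (norm x)\<^sup>2"
  using norm_eq_sqrt_cinner[of x] cinner_nonneg[of x] by simp

lemma cinner_self: "cinner x x = complex_of_real ((norm x)\<^sup>2)"
  using cinner_self_real Re_cinner_self by metis

lemma cinner_weak_cs: "2 * cmod (cinner a b) \<le> (norm a)\<^sup>2 + (norm b)\<^sup>2"
proof (cases "cinner a b = 0")
  case True then show ?thesis by simp
next
  case False
  define w where "w = cinner a b"
  define r where "r = cmod w"
  define u where "u = w / complex_of_real r"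
  have rpos: "r > 0" using False w_def r_def by simp
  have rnz: "complex_of_real r \<noteq> 0" using rpos by simp
  have wcw: "w * cnj w = complex_of_real r * complex_of_real r"
    unfolding r_def by (simp add: complex_norm_square[symmetric] power2_eq_square)
  have cu: "cnj u = cnj w / complex_of_real r" by (simp add: u_def)
  have k1: "cnj u * w = complex_of_real r"
  proof -
    have "cnj u * w = (w * cnj w) / complex_of_real r" by (simp add: cu)
    also have "\<dots> = complex_of_real r" using rnz by (simp add: wcw)
    finally show ?thesis .
  qed
  have u1: "u * cnj u = 1"
  proof -
    have "u * cnj u = (w * cnj w) / (complex_of_real r * complex_of_real r)" by (simp add: cu u_def)
    also have "\<dots> = 1" using rnz by (simp add: wcw)
    finally show ?thesis .
  qed
  have e1: "cinner a (u *\<^sub>C b) = complex_of_real r"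
    by (simp add: cinner_scaleC_right w_def[symmetric] k1)
  have e2: "cinner (u *\<^sub>C b) a = complex_of_real r"
    using e1 cinner_commute[of "u *\<^sub>C b" a] by simp
  have e3: "cinner (u *\<^sub>C b) (u *\<^sub>C b) = cinner b b"
    by (simp add: cinner_scaleC_left cinner_scaleC_right mult.assoc[symmetric] u1 mult.commute[of "cnj u" u])
  have "0 \<le> Re (cinner (a - u *\<^sub>C b) (a - u *\<^sub>C b))" by (rule cinner_nonneg)
  also have "cinner (a - u *\<^sub>C b) (a - u *\<^sub>C b) = cinner a a - cinner a (u *\<^sub>C b) - (cinner (u *\<^sub>C b) a - cinner (u *\<^sub>C b) (u *\<^sub>C b))"
    by (simp add: cinner_diff_left cinner_diff_right)
  finally have "0 \<le> (norm a)\<^sup>2 - r - (r - (norm b)\<^sup>2)" using e1 e2 e3 by (simp add: Re_cinner_self)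
  then show ?thesis by (simp add: w_def r_def)
qed

lemma pythag: "cinner u w = 0 \<Longrightarrow> (norm (u + w))\<^sup>2 = (norm u)\<^sup>2 + (norm w)\<^sup>2"
proof -
  assume h: "cinner u w = 0"
  then have h2: "cinner w u = 0" using cinner_commute[of w u] by simp
  have "Re (cinner (u + w) (u + w)) = Re (cinner u u) + Re (cinner w w)"
    by (simp add: cinner_add_left cinner_add_right h h2)
  then show ?thesis by (simp add: Re_cinner_self)
qed

lemma norm_scaleC: "norm (a *\<^sub>C (x::'a::complex_inner)) = cmod a * norm x"
proof -
  have c1: "cinner (a *\<^sub>C x) (a *\<^sub>C x) = (a * cnj a) * cinner x x"
    by (simp add: cinner_scaleC_left cinner_scaleC_right mult.assoc)
  have c2: "a * cnj a = complex_of_real ((cmod a)\<^sup>2)" by (rule complex_norm_square[symmetric])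
  have "(norm (a *\<^sub>C x))\<^sup>2 = Re (cinner (a *\<^sub>C x) (a *\<^sub>C x))" by (simp only: Re_cinner_self)
  also have "\<dots> = Re (complex_of_real ((cmod a)\<^sup>2) * complex_of_real ((norm x)\<^sup>2))"
    by (simp only: c1 c2 cinner_self[of x])
  also have "\<dots> = (cmod a * norm x)\<^sup>2" by (simp add: power_mult_distrib)
  finally show ?thesis
    by (rule power2_eq_imp_eq) simp_all
qed

section \<open>Orthogonal projections\<close>

lemma op_add: "orth_proj P \<Longrightarrow> P (x + y) = P x + P y" unfolding orth_proj_def by blast
lemma op_scale: "orth_proj P \<Longrightarrow> P (a *\<^sub>C x) = a *\<^sub>C P x" unfolding orth_proj_def by blast
lemma op_idem: "orth_proj P \<Longrightarrow> P (P x) = P x" unfolding orth_proj_def by blast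
lemma op_adj: "orth_proj P \<Longrightarrow> cinner (P x) y = cinner x (P y)" unfolding orth_proj_def by blast

lemma op_zero: "orth_proj P \<Longrightarrow> P 0 = 0"
  using op_add[of P 0 0] by simp

lemma op_minus: "orth_proj P \<Longrightarrow> P (- x) = - P x"
  using op_add[of P x "- x"] op_zero[of P] by (simp add: neg_from_sum)

lemma op_diff: "orth_proj P \<Longrightarrow> P (x - y) = P x - P y"
  using op_add[of P x "- y"] op_minus[of P y] by simp

lemma op_perp: "orth_proj P \<Longrightarrow> P (x - P x) = 0"
  by (simp add: op_diff op_idem)

lemma op_orth: "orth_proj P \<Longrightarrow> cinner (x - P x) (P y) = 0"
proof -
  assume p: "orth_proj P"
  have "cinner (x - P x) (P y) = cinner (P (x - P x)) y" using op_adj[OF p] by simp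
  then show ?thesis using op_perp[OF p] by simp
qed

lemma op_orth': "orth_proj P \<Longrightarrow> cinner (P y) (x - P x) = 0"
  using op_orth[of P x y] cinner_commute[of "P y" "x - P x"] by simp

lemma op_pythag: "orth_proj P \<Longrightarrow> (norm x)\<^sup>2 = (norm (P x))\<^sup>2 + (norm (x - P x))\<^sup>2"
  using pythag[OF op_orth'[of P x x]] by simp

lemma op_norm: "orth_proj P \<Longrightarrow> norm (P x) \<le> norm x"
  using op_pythag[of P x] by (metis abs_norm_cancel le_add_same_cancel1 real_sqrt_le_mono real_sqrt_abs zero_le_power2)

lemma op_norm_perp: "orth_proj P \<Longrightarrow> norm (x - P x) \<le> norm x"
  using op_pythag[of P x] by (metis abs_norm_cancel le_add_same_cancel2 real_sqrt_le_mono real_sqrt_abs zero_le_power2)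

lemma op_norm2: "orth_proj P \<Longrightarrow> (norm ((a - P a) + P b))\<^sup>2 \<le> (norm a)\<^sup>2 + (norm b)\<^sup>2"
proof -
  assume p: "orth_proj P"
  have "(norm ((a - P a) + P b))\<^sup>2 = (norm (a - P a))\<^sup>2 + (norm (P b))\<^sup>2"
    by (rule pythag[OF op_orth[OF p]])
  also have "\<dots> \<le> (norm a)\<^sup>2 + (norm b)\<^sup>2"
    using op_norm[OF p, of b] op_norm_perp[OF p, of a]
    by (intro add_mono power_mono) auto
  finally show ?thesis .
qed

lemma op_adj_perp: "orth_proj P \<Longrightarrow> cinner x (y - P y) = cinner (x - P x) y"
  by (simp add: cinner_diff_left cinner_diff_right op_adj)

section \<open>H2 operators\<close>

definition bstar :: "('a::complex_inner \<Rightarrow> 'a) \<Rightarrow> (nat \<Rightarrow> 'a) \<Rightarrow> (nat \<Rightarrow> 'a)" where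
  "bstar P f = (\<lambda>n. (f n - P (f n)) + P (f (Suc n)))"

lemma H2_iff: "f \<in> H2 \<longleftrightarrow> summable (\<lambda>n. (norm (f n))\<^sup>2)"
  by (simp add: H2_def)

lemma bstar_H2:
  assumes p: "orth_proj P" and f: "f \<in> H2"
  shows "bstar P f \<in> H2"
proof -
  have s: "summable (\<lambda>n. (norm (f n))\<^sup>2 + (norm (f (Suc n)))\<^sup>2)"
    using f summable_Suc_iff[of "\<lambda>n. (norm (f n))\<^sup>2"] by (intro summable_add) (auto simp: H2_iff)
  show ?thesis unfolding H2_iff bstar_def
    by (rule summable_comparison_test'[OF s, of 0]) (simp add: op_norm2[OF p])
qed

lemma shift_summable: "summable a \<Longrightarrow> summable (\<lambda>n. if n = 0 then 0 else (a (n - 1) :: real))"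
  by (subst summable_Suc_iff[symmetric]) simp

lemma mf_H2:
  assumes p: "orth_proj P" and g: "g \<in> H2"
  shows "mult_factor P g \<in> H2"
proof -
  have s: "summable (\<lambda>n. (norm (g n))\<^sup>2 + (if n = 0 then 0 else (norm (g (n - 1)))\<^sup>2))"
    using g by (intro summable_add shift_summable) (auto simp: H2_iff)
  show ?thesis unfolding H2_iff mult_factor_def
  proof (rule summable_comparison_test'[OF s, of 0])
    fix n :: nat
    show "norm ((norm (g n - P (g n) + (if n = 0 then 0 else P (g (n - 1)))))\<^sup>2)
        \<le> (norm (g n))\<^sup>2 + (if n = 0 then 0 else (norm (g (n - 1)))\<^sup>2)"
    proof (cases "n = 0")
      case True
      then show ?thesis using op_norm_perp[OF p, of "g 0"] by (simp add: power_mono)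
    next
      case False
      then show ?thesis using op_norm2[OF p, of "g n" "g (n - 1)"] by simp
    qed
  qed
qed

lemma cinner_bound: "norm (cinner a b) \<le> ((norm a)\<^sup>2 + (norm b)\<^sup>2) / 2"
  using cinner_weak_cs[of a b] by simp

lemma summable_cinner:
  assumes f: "f \<in> H2" and g: "g \<in> H2"
    and bf: "\<And>n. norm (a n) \<le> norm (f n)" and bg: "\<And>n. norm (b n) \<le> norm (g n)"
  shows "summable (\<lambda>n. cinner (a n) (b n))"
proof (rule summable_comparison_test'[of "\<lambda>n. ((norm (f n))\<^sup>2 + (norm (g n))\<^sup>2) / 2" 0])
  show "summable (\<lambda>n. ((norm (f n))\<^sup>2 + (norm (g n))\<^sup>2) / 2)"
    using f g by (intro summable_divide summable_add) (auto simp: H2_iff)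
  fix n
  have "norm (cinner (a n) (b n)) \<le> ((norm (a n))\<^sup>2 + (norm (b n))\<^sup>2) / 2" by (rule cinner_bound)
  also have "\<dots> \<le> ((norm (f n))\<^sup>2 + (norm (g n))\<^sup>2) / 2"
    using bf[of n] bg[of n] by (intro divide_right_mono add_mono power_mono) auto
  finally show "norm (cinner (a n) (b n)) \<le> ((norm (f n))\<^sup>2 + (norm (g n))\<^sup>2) / 2" .
qed

lemma mf_adj:
  assumes p: "orth_proj P" and f: "f \<in> H2" and g: "g \<in> H2"
  shows "h2inner f (mult_factor P g) = h2inner (bstar P f) g"
proof -
  define X where "X n = cinner (f n - P (f n)) (g n)" for n
  define Z where "Z n = cinner (P (f (Suc n))) (g n)" for n
  define Y where "Y n = (if n = 0 then 0 else Z (n - 1))" for n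
  have sX: "summable X" unfolding X_def
    by (rule summable_cinner[OF f g]) (auto simp: op_norm_perp[OF p])
  have f': "(\<lambda>n. f (Suc n)) \<in> H2" using f summable_Suc_iff[of "\<lambda>n. (norm (f n))\<^sup>2"] by (simp add: H2_iff)
  have sZ: "summable Z" unfolding Z_def
    by (rule summable_cinner[OF f' g]) (auto simp: op_norm[OF p])
  have sY: "summable Y" unfolding Y_def by (subst summable_Suc_iff[symmetric]) (simp add: sZ)
  have YZ: "suminf Y = suminf Z"
    using suminf_split_head[OF sY] by (simp add: Y_def)
  have l: "(\<lambda>n. cinner (f n) (mult_factor P g n)) = (\<lambda>n. X n + Y n)"
  proof
    fix n
    show "cinner (f n) (mult_factor P g n) = X n + Y n"
    proof (cases n)
      case 0 then show ?thesis
        by (simp add: mult_factor_def X_def Y_def op_adj_perp[OF p])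
    next
      case (Suc m) then show ?thesis
        by (simp add: mult_factor_def X_def Y_def Z_def op_adj_perp[OF p] cinner_add_right op_adj[OF p])
    qed
  qed
  have r: "(\<lambda>n. cinner (bstar P f n) (g n)) = (\<lambda>n. X n + Z n)"
    by (simp add: bstar_def X_def Z_def cinner_add_left)
  have "h2inner f (mult_factor P g) = suminf X + suminf Y"
    unfolding h2inner_def l by (rule suminf_add[OF sX sY, symmetric])
  also have "\<dots> = suminf X + suminf Z" by (simp add: YZ)
  also have "\<dots> = h2inner (bstar P f) g"
    unfolding h2inner_def r by (rule suminf_add[OF sX sZ])
  finally show ?thesis .
qed

definition ThM :: "(nat \<Rightarrow> 'a::complex_inner \<Rightarrow> 'a) \<Rightarrow> nat \<Rightarrow> (nat \<Rightarrow> 'a) \<Rightarrow> (nat \<Rightarrow> 'a)" where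
  "ThM P m g = fold (\<lambda>k h. mult_factor (P k) h) [1..<Suc m] g"

lemma ThM_0[simp]: "ThM P 0 g = g" by (simp add: ThM_def)

lemma ThM_Suc: "ThM P (Suc m) g = mult_factor (P (Suc m)) (ThM P m g)"
  by (simp add: ThM_def)

lemma Theta_mult_ThM: "Theta_mult P N = ThM P (Suc N)"
  by (simp add: Theta_mult_def ThM_def fun_eq_iff)

fun TS :: "(nat \<Rightarrow> 'a::complex_inner \<Rightarrow> 'a) \<Rightarrow> nat \<Rightarrow> (nat \<Rightarrow> 'a) \<Rightarrow> (nat \<Rightarrow> 'a)" where
  "TS P 0 f = f"
| "TS P (Suc m) f = TS P m (bstar (P (Suc m)) f)"

definition T0 :: "(nat \<Rightarrow> 'a::complex_inner \<Rightarrow> 'a) \<Rightarrow> nat \<Rightarrow> 'a \<Rightarrow> 'a" where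
  "T0 P m x = fold (\<lambda>k y. y - P k y) [1..<Suc m] x"

lemma T0_0[simp]: "T0 P 0 x = x" by (simp add: T0_def)

lemma T0_Suc: "T0 P (Suc m) x = T0 P m x - P (Suc m) (T0 P m x)"
  by (simp add: T0_def)

lemma Theta0_T0: "Theta0 P N = T0 P (Suc N)"
  by (simp add: Theta0_def T0_def fun_eq_iff)

fun TS0 :: "(nat \<Rightarrow> 'a::complex_inner \<Rightarrow> 'a) \<Rightarrow> nat \<Rightarrow> 'a \<Rightarrow> 'a" where
  "TS0 P 0 x = x"
| "TS0 P (Suc m) x = TS0 P m (x - P (Suc m) x)"

definition projs :: "(nat \<Rightarrow> 'a::complex_inner \<Rightarrow> 'a) \<Rightarrow> nat \<Rightarrow> bool" where
  "projs P m \<longleftrightarrow> (\<forall>k\<in>{1..m}. orth_proj (P k))"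

lemma projs_SucD: "projs P (Suc m) \<Longrightarrow> projs P m"
  by (auto simp: projs_def)

lemma projs_SucD2: "projs P (Suc m) \<Longrightarrow> orth_proj (P (Suc m))"
  by (auto simp: projs_def)

lemma TS_H2: "projs P m \<Longrightarrow> f \<in> H2 \<Longrightarrow> TS P m f \<in> H2"
proof (induction m arbitrary: f)
  case (Suc m)
  have p: "projs P m" and q: "orth_proj (P (Suc m))" using projs_SucD[OF Suc.prems(1)] projs_SucD2[OF Suc.prems(1)] by auto
  show ?case using Suc.IH[OF p bstar_H2[OF q Suc.prems(2)]] by simp
qed simp

lemma ThM_H2: "projs P m \<Longrightarrow> g \<in> H2 \<Longrightarrow> ThM P m g \<in> H2"
proof (induction m)
  case (Suc m)
  have p: "projs P m" and q: "orth_proj (P (Suc m))" using projs_SucD[OF Suc.prems(1)] projs_SucD2[OF Suc.prems(1)] by auto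
  show ?case using mf_H2[OF q Suc.IH[OF p Suc.prems(2)]] by (simp add: ThM_Suc)
qed simp

lemma ThM_adj: "projs P m \<Longrightarrow> f \<in> H2 \<Longrightarrow> g \<in> H2 \<Longrightarrow> h2inner f (ThM P m g) = h2inner (TS P m f) g"
proof (induction m arbitrary: f)
  case (Suc m)
  have p: "projs P m" and q: "orth_proj (P (Suc m))" using projs_SucD[OF Suc.prems(1)] projs_SucD2[OF Suc.prems(1)] by auto
  have "h2inner f (ThM P (Suc m) g) = h2inner (bstar (P (Suc m)) f) (ThM P m g)"
    by (simp add: ThM_Suc mf_adj[OF q Suc.prems(2) ThM_H2[OF p Suc.prems(3)]])
  also have "\<dots> = h2inner (TS P m (bstar (P (Suc m)) f)) g"
    by (rule Suc.IH[OF p bstar_H2[OF q Suc.prems(2)] Suc.prems(3)])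
  finally show ?case by simp
qed simp

lemma h2inner_self_zero:
  assumes f: "f \<in> H2" and z: "h2inner f f = 0"
  shows "f = (\<lambda>n. 0)"
proof -
  have s: "summable (\<lambda>n. (norm (f n))\<^sup>2)" using f by (simp add: H2_iff)
  have "h2inner f f = (\<Sum>n. complex_of_real ((norm (f n))\<^sup>2))"
    by (simp add: h2inner_def cinner_self)
  also have "\<dots> = complex_of_real (\<Sum>n. (norm (f n))\<^sup>2)"
    by (rule suminf_of_real[OF s, symmetric])
  finally have "(\<Sum>n. (norm (f n))\<^sup>2) = 0" using z by simp
  then have "\<forall>n. (norm (f n))\<^sup>2 = 0" using suminf_eq_zero_iff[OF s] by simp
  then show ?thesis by auto
qed

lemma h2inner_zero_left[simp]: "h2inner (\<lambda>n. 0) g = 0"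
  by (simp add: h2inner_def)

lemma orth_compl_eq:
  assumes p: "projs P m"
  shows "h2_orth_compl (ThM P m ` H2) = {f \<in> H2. TS P m f = (\<lambda>n. 0)}"
proof
  show "h2_orth_compl (ThM P m ` H2) \<subseteq> {f \<in> H2. TS P m f = (\<lambda>n. 0)}"
  proof
    fix f assume f: "f \<in> h2_orth_compl (ThM P m ` H2)"
    then have fH: "f \<in> H2" and o: "\<And>g. g \<in> H2 \<Longrightarrow> h2inner f (ThM P m g) = 0"
      by (auto simp: h2_orth_compl_def)
    have t: "TS P m f \<in> H2" by (rule TS_H2[OF p fH])
    have "h2inner (TS P m f) (TS P m f) = 0"
      using o[OF t] ThM_adj[OF p fH t] by simp
    then show "f \<in> {f \<in> H2. TS P m f = (\<lambda>n. 0)}" using h2inner_self_zero[OF t] fH by simp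
  qed
next
  show "{f \<in> H2. TS P m f = (\<lambda>n. 0)} \<subseteq> h2_orth_compl (ThM P m ` H2)"
    using ThM_adj[OF p] by (auto simp: h2_orth_compl_def)
qed

lemma T0_adj: "projs P m \<Longrightarrow> cinner (T0 P m x) y = cinner x (TS0 P m y)"
proof (induction m arbitrary: y)
  case (Suc m)
  have p: "projs P m" and q: "orth_proj (P (Suc m))" using projs_SucD[OF Suc.prems(1)] projs_SucD2[OF Suc.prems(1)] by auto
  have "cinner (T0 P (Suc m) x) y = cinner (T0 P m x) (y - P (Suc m) y)"
    by (simp add: T0_Suc op_adj_perp[OF q])
  also have "\<dots> = cinner x (TS0 P (Suc m) y)" by (simp add: Suc.IH[OF p])
  finally show ?case .
qed simp

lemma adjoint_unique:
  assumes "\<forall>x y. cinner (T x) y = cinner x (S y)"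
  shows "adjoint T = S"
  unfolding adjoint_def
proof (rule the_equality)
  show "\<forall>x y. cinner (T x) y = cinner x (S y)" by (rule assms)
  fix S' assume h: "\<forall>x y. cinner (T x) y = cinner x (S' y)"
  show "S' = S"
  proof
    fix y
    have "cinner (S' y - S y) (S' y - S y) = cinner (S' y - S y) (S' y) - cinner (S' y - S y) (S y)"
      by (rule cinner_diff_right)
    also have "\<dots> = 0" using h assms by simp
    finally have "cinner (S' y - S y) (S' y - S y) = 0" .
    then show "S' y = S y" using cinner_eq_zero_iff[of "S' y - S y"] by simp
  qed
qed

lemma adjoint_Theta0: "projs P (Suc N) \<Longrightarrow> adjoint (Theta0 P N) = TS0 P (Suc N)"
  unfolding Theta0_T0 by (rule adjoint_unique) (simp add: T0_adj)

lemma bstar_const: "orth_proj Q \<Longrightarrow> bstar Q (\<lambda>n. if n = 0 then x else 0) = (\<lambda>n. if n = 0 then x - Q x else 0)"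
  by (auto simp: bstar_def fun_eq_iff op_zero)

lemma TS_const: "projs P m \<Longrightarrow> TS P m (\<lambda>n. if n = 0 then x else 0) = (\<lambda>n. if n = 0 then TS0 P m x else 0)"
proof (induction m arbitrary: x)
  case (Suc m)
  have p: "projs P m" and q: "orth_proj (P (Suc m))" using projs_SucD[OF Suc.prems(1)] projs_SucD2[OF Suc.prems(1)] by auto
  show ?case by (simp only: TS.simps TS0.simps bstar_const[OF q] Suc.IH[OF p] cong: if_cong)
qed (simp add: fun_eq_iff)

lemma bstar_shift: "bshift (bstar Q f) = bstar Q (bshift f)"
  by (simp add: bshift_def bstar_def)

lemma TS_shift: "TS P m (bshift f) = bshift (TS P m f)"
  by (induction m arbitrary: f) (simp_all add: bstar_shift[symmetric])

lemma TS_shiftn: "TS P m ((bshift ^^ k) f) = (bshift ^^ k) (TS P m f)"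
  by (induction k) (simp_all add: TS_shift)

definition sc :: "complex \<Rightarrow> (nat \<Rightarrow> 'a::complex_inner) \<Rightarrow> (nat \<Rightarrow> 'a)" where
  "sc c f = (\<lambda>n. c *\<^sub>C f n)"

lemma bstar_add: "orth_proj Q \<Longrightarrow> bstar Q (\<lambda>n. f n + g n) = (\<lambda>n. bstar Q f n + bstar Q g n)"
  by (simp add: bstar_def fun_eq_iff op_add algebra_simps)

lemma bstar_sc: "orth_proj Q \<Longrightarrow> bstar Q (sc c f) = sc c (bstar Q f)"
  by (simp add: bstar_def sc_def fun_eq_iff op_scale scaleC_add_right scaleC_diff_right)

lemma bstar_diff: "orth_proj Q \<Longrightarrow> bstar Q (\<lambda>n. f n - g n) = (\<lambda>n. bstar Q f n - bstar Q g n)"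
  by (simp add: bstar_def fun_eq_iff op_diff algebra_simps)

lemma TS_add: "projs P m \<Longrightarrow> TS P m (\<lambda>n. f n + g n) = (\<lambda>n. TS P m f n + TS P m g n)"
proof (induction m arbitrary: f g)
  case (Suc m) then show ?case
    using projs_SucD[OF Suc.prems(1)] projs_SucD2[OF Suc.prems(1)] by (simp add: bstar_add)
qed simp

lemma TS_sc: "projs P m \<Longrightarrow> TS P m (sc c f) = sc c (TS P m f)"
proof (induction m arbitrary: f)
  case (Suc m) then show ?case
    using projs_SucD[OF Suc.prems(1)] projs_SucD2[OF Suc.prems(1)] by (simp add: bstar_sc)
qed simp

lemma TS_diff: "projs P m \<Longrightarrow> TS P m (\<lambda>n. f n - g n) = (\<lambda>n. TS P m f n - TS P m g n)"
proof (induction m arbitrary: f g)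
  case (Suc m) then show ?case
    using projs_SucD[OF Suc.prems(1)] projs_SucD2[OF Suc.prems(1)] by (simp add: bstar_diff)
qed simp

lemma TS_zero: "projs P m \<Longrightarrow> TS P m (\<lambda>n. 0) = (\<lambda>n. 0)"
  using TS_diff[of P m "\<lambda>n. 0" "\<lambda>n. 0"] by simp

lemma bstar_vanish:
  assumes q: "orth_proj Q" and h: "\<forall>n\<ge>j. bstar Q f n = 0"
  shows "\<forall>n\<ge>Suc j. f n = 0"
proof -
  have a: "Q (f (Suc n)) = 0" if "n \<ge> j" for n
  proof -
    have "Q (bstar Q f n) = 0" using h that op_zero[OF q] by simp
    then show ?thesis by (simp add: bstar_def op_add[OF q] op_perp[OF q] op_idem[OF q])
  qed
  show ?thesis
  proof (intro allI impI)
    fix n assume n: "Suc j \<le> n"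
    have "bstar Q f n = 0" using h n by simp
    then have "f n - Q (f n) = 0" using a[of n] n by (simp add: bstar_def)
    moreover have "Q (f n) = 0" using a[of "n - 1"] n by (cases n) auto
    ultimately show "f n = 0" by simp
  qed
qed

lemma TS_vanish: "projs P m \<Longrightarrow> \<forall>n\<ge>j. TS P m f n = 0 \<Longrightarrow> \<forall>n\<ge>j + m. f n = 0"
proof (induction m arbitrary: f)
  case (Suc m)
  have p: "projs P m" and q: "orth_proj (P (Suc m))" using projs_SucD[OF Suc.prems(1)] projs_SucD2[OF Suc.prems(1)] by auto
  have "\<forall>n\<ge>j + m. bstar (P (Suc m)) f n = 0" using Suc.IH[OF p] Suc.prems(2) by simp
  then show ?case using bstar_vanish[OF q] by simp
qed simp

lemma bstar_bound: "orth_proj Q \<Longrightarrow> \<forall>k. norm (f k) \<le> r \<Longrightarrow> norm (bstar Q f n) \<le> 2 * r"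
proof -
  assume q: "orth_proj Q" and b: "\<forall>k. norm (f k) \<le> r"
  have "norm (bstar Q f n) \<le> norm (f n - Q (f n)) + norm (Q (f (Suc n)))"
    unfolding bstar_def by (rule norm_triangle_ineq)
  also have "\<dots> \<le> norm (f n) + norm (f (Suc n))"
    using op_norm[OF q] op_norm_perp[OF q] by (intro add_mono) auto
  also have "\<dots> \<le> 2 * r" using b[rule_format, of n] b[rule_format, of "Suc n"] by simp
  finally show ?thesis .
qed

lemma TS_bound: "projs P m \<Longrightarrow> \<forall>k. norm (f k) \<le> r \<Longrightarrow> norm (TS P m f n) \<le> 2 ^ m * r"
proof (induction m arbitrary: f r)
  case (Suc m)
  have p: "projs P m" and q: "orth_proj (P (Suc m))" using projs_SucD[OF Suc.prems(1)] projs_SucD2[OF Suc.prems(1)] by auto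
  have "\<forall>k. norm (bstar (P (Suc m)) f k) \<le> 2 * r" using bstar_bound[OF q Suc.prems(2)] by simp
  from Suc.IH[OF p this] show ?case by (simp add: mult.assoc mult.commute mult.left_commute)
qed simp

lemma norm_le_h2norm: "f \<in> H2 \<Longrightarrow> norm (f k) \<le> h2norm f"
proof -
  assume f: "f \<in> H2"
  have s: "summable (\<lambda>n. (norm (f n))\<^sup>2)" using f by (simp add: H2_iff)
  have "sum (\<lambda>n. (norm (f n))\<^sup>2) {k} \<le> (\<Sum>n. (norm (f n))\<^sup>2)"
    by (rule sum_le_suminf[OF s]) auto
  then have "(norm (f k))\<^sup>2 \<le> (\<Sum>n. (norm (f n))\<^sup>2)" by simp
  then have "sqrt ((norm (f k))\<^sup>2) \<le> sqrt (\<Sum>n. (norm (f n))\<^sup>2)" by (rule real_sqrt_le_mono)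
  then show ?thesis by (simp add: h2norm_def)
qed

lemma diff_H2: "f \<in> H2 \<Longrightarrow> g \<in> H2 \<Longrightarrow> (\<lambda>n. f n - g n) \<in> H2"
proof -
  assume f: "f \<in> H2" and g: "g \<in> H2"
  have s: "summable (\<lambda>n. 2 * (norm (f n))\<^sup>2 + 2 * (norm (g n))\<^sup>2)"
    using f g by (intro summable_add summable_mult) (auto simp: H2_iff)
  show ?thesis unfolding H2_iff
  proof (rule summable_comparison_test'[OF s, of 0])
    fix n
    have "norm (f n - g n) \<le> norm (f n) + norm (g n)" by (rule norm_triangle_ineq4)
    then have "(norm (f n - g n))\<^sup>2 \<le> (norm (f n) + norm (g n))\<^sup>2" by (intro power_mono) auto
    also have "\<dots> \<le> 2 * (norm (f n))\<^sup>2 + 2 * (norm (g n))\<^sup>2"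
    proof -
      have "(norm (f n) + norm (g n))\<^sup>2 + (norm (f n) - norm (g n))\<^sup>2 = 2 * (norm (f n))\<^sup>2 + 2 * (norm (g n))\<^sup>2"
        by (simp add: power2_eq_square algebra_simps)
      moreover have "0 \<le> (norm (f n) - norm (g n))\<^sup>2" by simp
      ultimately show ?thesis by linarith
    qed
    finally show "norm ((norm (f n - g n))\<^sup>2) \<le> 2 * (norm (f n))\<^sup>2 + 2 * (norm (g n))\<^sup>2" by simp
  qed
qed

lemma closed_ker:
  assumes p: "projs P m"
  shows "h2_closure {f \<in> H2. TS P m f = (\<lambda>n. 0)} \<subseteq> {f \<in> H2. TS P m f = (\<lambda>n. 0)}"
proof
  fix f assume f: "f \<in> h2_closure {f \<in> H2. TS P m f = (\<lambda>n. 0)}"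
  then have fH: "f \<in> H2" and ap: "\<And>e. e > 0 \<Longrightarrow> \<exists>g. g \<in> H2 \<and> TS P m g = (\<lambda>n. 0) \<and> h2norm (\<lambda>n. f n - g n) < e"
    by (auto simp: h2_closure_def)
  have "TS P m f n = 0" for n
  proof (rule ccontr)
    assume ne: "TS P m f n \<noteq> 0"
    define e where "e = norm (TS P m f n) / 2 ^ m"
    have e: "e > 0" using ne by (simp add: e_def)
    obtain g where g: "g \<in> H2" "TS P m g = (\<lambda>n. 0)" "h2norm (\<lambda>n. f n - g n) < e" using ap[OF e] by blast
    have d: "(\<lambda>n. f n - g n) \<in> H2" by (rule diff_H2[OF fH g(1)])
    have "TS P m (\<lambda>n. f n - g n) = TS P m f" using TS_diff[OF p, of f g] g(2)
      by simp
    then have "norm (TS P m f n) = norm (TS P m (\<lambda>n. f n - g n) n)" by simp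
    also have "\<dots> \<le> 2 ^ m * h2norm (\<lambda>n. f n - g n)"
      by (rule TS_bound[OF p]) (auto intro: norm_le_h2norm[OF d])
    also have "\<dots> < 2 ^ m * e" using g(3) by simp
    also have "\<dots> = norm (TS P m f n)" by (simp add: e_def)
    finally show False by simp
  qed
  then show "f \<in> {f \<in> H2. TS P m f = (\<lambda>n. 0)}" using fH by auto
qed

interpretation vs: vector_space "sc :: complex \<Rightarrow> (nat \<Rightarrow> 'a::complex_inner) \<Rightarrow> nat \<Rightarrow> 'a"
  by unfold_locales (simp_all add: sc_def fun_eq_iff scaleC_add_right scaleC_add_left scaleC_scaleC scaleC_one)

lemma sum_fun_apply': "(\<Sum>v\<in>T. h v) (n::nat) = (\<Sum>v\<in>T. h v n)"
  by (induction T rule: infinite_finite_induct) simp_all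

lemma sum_sc: "(\<Sum>v\<in>T. sc (c v) v) = (\<lambda>n. \<Sum>v\<in>T. c v *\<^sub>C v n)"
  by (simp add: fun_eq_iff sum_fun_apply' sc_def)

lemma seq_cspan_eq: "seq_cspan S = vs.span S"
  unfolding seq_cspan_def vs.span_explicit sum_sc by blast

lemma seq_cindependent_eq: "seq_cindependent S \<longleftrightarrow> vs.independent S"
  unfolding seq_cindependent_def vs.dependent_explicit sum_sc
  by (auto simp: fun_eq_iff)

lemma plus_fun_lam: "f + g = (\<lambda>n. f n + g n)"
  by (simp add: fun_eq_iff)

lemma zero_fun_lam: "0 = (\<lambda>n::nat. 0)"
  by (simp add: fun_eq_iff)

lemma subspace_closed: "h2_closed_subspace F \<Longrightarrow> vs.subspace F"
  unfolding vs.subspace_def h2_closed_subspace_def plus_fun_lam zero_fun_lam sc_def by blast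

lemma subspace_vanish: "vs.subspace {f :: nat \<Rightarrow> 'a::complex_inner. \<forall>n\<in>A. f n = 0}"
  unfolding vs.subspace_def by (simp add: sc_def)

lemma span_preimage:
  fixes L :: "(nat \<Rightarrow> 'a::complex_inner) \<Rightarrow> (nat \<Rightarrow> 'a)"
  assumes add: "\<And>x y. L (\<lambda>n. x n + y n) = (\<lambda>n. L x n + L y n)"
    and scl: "\<And>c x. L (sc c x) = sc c (L x)"
    and V: "vs.subspace V" and S: "\<And>x. x \<in> S \<Longrightarrow> L x \<in> V"
  shows "vs.span S \<subseteq> {x. L x \<in> V}"
proof (rule vs.span_minimal)
  show "S \<subseteq> {x. L x \<in> V}" using S by blast
  have z: "L (\<lambda>n. 0) = (\<lambda>n. 0)"
  proof -
    have "L (sc 0 (\<lambda>n. 0)) = sc 0 (L (\<lambda>n. 0))" by (rule scl)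
    then show ?thesis by (simp add: sc_def)
  qed
  show "vs.subspace {x. L x \<in> V}"
    using V unfolding vs.subspace_def plus_fun_lam zero_fun_lam
    by (simp add: z add scl)
qed

definition Gp :: "(nat \<Rightarrow> 'a) \<Rightarrow> (nat \<Rightarrow> 'a) set" where
  "Gp p = {(bshift ^^ k) p | k. True}"

definition Dp :: "nat \<Rightarrow> (nat \<Rightarrow> 'a) \<Rightarrow> (nat \<Rightarrow> 'a) set" where
  "Dp N p = {(bshift ^^ k) p | k. k \<le> N}"

lemma bshift_pow_apply: "(bshift ^^ k) p n = p (n + k)"
  by (induction k arbitrary: n) (simp_all add: bshift_def)

lemma E_Gp: "E p = h2_closure (vs.span (Gp p))"
  by (simp add: E_def Gp_def seq_cspan_eq)

lemma pow_Suc_apply: "(bshift ^^ Suc j) p = (bshift ^^ j) (bshift p)"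
  by (simp only: funpow_Suc_right o_apply)

lemma Dp_Suc: "Dp (Suc N) p = insert p (Dp N (bshift p))"
proof
  show "Dp (Suc N) p \<subseteq> insert p (Dp N (bshift p))"
  proof
    fix f assume "f \<in> Dp (Suc N) p"
    then obtain k where k: "f = (bshift ^^ k) p" "k \<le> Suc N" by (auto simp: Dp_def)
    show "f \<in> insert p (Dp N (bshift p))"
    proof (cases k)
      case 0 then show ?thesis using k by simp
    next
      case (Suc j)
      then have "f = (bshift ^^ j) (bshift p)" "j \<le> N" using k pow_Suc_apply by auto
      then show ?thesis by (auto simp: Dp_def)
    qed
  qed
next
  show "insert p (Dp N (bshift p)) \<subseteq> Dp (Suc N) p"
  proof
    fix f assume "f \<in> insert p (Dp N (bshift p))"
    then show "f \<in> Dp (Suc N) p"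
    proof
      assume "f = p" then show ?thesis unfolding Dp_def by (intro CollectI exI[of _ 0]) simp
    next
      assume "f \<in> Dp N (bshift p)"
      then obtain j where j: "f = (bshift ^^ j) (bshift p)" "j \<le> N" by (auto simp: Dp_def)
      then show ?thesis unfolding Dp_def using pow_Suc_apply[of j p]
        by (intro CollectI exI[of _ "Suc j"]) simp
    qed
  qed
qed

lemma Dp_finite: "finite (Dp N p)"
proof -
  have "Dp N p = (\<lambda>k. (bshift ^^ k) p) ` {..N}" by (auto simp: Dp_def)
  then show ?thesis by simp
qed

lemma indep_Dp: "is_poly_deg p N \<Longrightarrow> vs.independent (Dp N p) \<and> card (Dp N p) = Suc N"
proof (induction N arbitrary: p)
  case 0
  then have "p \<noteq> (\<lambda>n. 0)" by (auto simp: is_poly_deg_def fun_eq_iff)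
  moreover have "Dp 0 p = {p}" by (auto simp: Dp_def)
  ultimately show ?case using vs.dependent_single[of p] by (simp add: zero_fun_lam)
next
  case (Suc N)
  have pd: "is_poly_deg (bshift p) N" using Suc.prems by (auto simp: is_poly_deg_def bshift_def)
  note IH = Suc.IH[OF pd]
  have sub: "vs.span (Dp N (bshift p)) \<subseteq> {f. \<forall>n\<in>{Suc N}. f n = 0}"
  proof (rule vs.span_minimal[OF _ subspace_vanish])
    show "Dp N (bshift p) \<subseteq> {f. \<forall>n\<in>{Suc N}. f n = 0}"
      using Suc.prems by (auto simp: Dp_def bshift_pow_apply is_poly_deg_def bshift_def)
  qed
  have nin: "p \<notin> vs.span (Dp N (bshift p))" using sub Suc.prems by (auto simp: is_poly_deg_def)
  then have nin2: "p \<notin> Dp N (bshift p)" using vs.span_superset by blast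
  show ?case
    using IH nin nin2 Dp_finite[of N "bshift p"]
    by (simp add: Dp_Suc vs.independent_insert)
qed

lemma Gp_span: "is_poly_deg p N \<Longrightarrow> vs.span (Gp p) = vs.span (Dp N p)"
proof -
  assume p: "is_poly_deg p N"
  have "Gp p \<subseteq> insert 0 (Dp N p)"
  proof
    fix f assume "f \<in> Gp p"
    then obtain k where k: "f = (bshift ^^ k) p" by (auto simp: Gp_def)
    show "f \<in> insert 0 (Dp N p)"
    proof (cases "k \<le> N")
      case True then show ?thesis using k by (auto simp: Dp_def)
    next
      case False
      then have "f = 0" using k p by (auto simp: fun_eq_iff bshift_pow_apply is_poly_deg_def)
      then show ?thesis by simp
    qed
  qed
  then have "vs.span (Gp p) \<subseteq> vs.span (Dp N p)"
    using vs.span_mono vs.span_insert_0 by metis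
  moreover have "Dp N p \<subseteq> Gp p" by (auto simp: Dp_def Gp_def)
  ultimately show ?thesis using vs.span_mono by blast
qed

lemma finsupp_H2: "\<forall>n>M. f n = 0 \<Longrightarrow> f \<in> H2"
proof -
  assume h: "\<forall>n>M. f n = 0"
  have "(\<lambda>n. (norm (f n))\<^sup>2) sums (\<Sum>n\<in>{..M}. (norm (f n))\<^sup>2)"
    by (rule sums_finite) (use h in auto)
  then show ?thesis by (auto simp: H2_iff sums_summable)
qed

lemma span_Gp_H2: "is_poly_deg p N \<Longrightarrow> vs.span (Gp p) \<subseteq> H2"
proof -
  assume p: "is_poly_deg p N"
  have "vs.span (Gp p) \<subseteq> {f. \<forall>n\<in>{N<..}. f n = 0}"
  proof (rule vs.span_minimal[OF _ subspace_vanish])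
    show "Gp p \<subseteq> {f. \<forall>n\<in>{N<..}. f n = 0}"
      using p by (auto simp: Gp_def bshift_pow_apply is_poly_deg_def)
  qed
  then show ?thesis
  proof (intro subsetI)
    fix x assume "vs.span (Gp p) \<subseteq> {f. \<forall>n\<in>{N<..}. f n = 0}" "x \<in> vs.span (Gp p)"
    then have "\<forall>n>N. x n = 0" by auto
    then show "x \<in> H2" by (rule finsupp_H2)
  qed
qed

definition rproj :: "'a::complex_inner \<Rightarrow> 'a \<Rightarrow> 'a" where
  "rproj v x = (cinner x v / cinner v v) *\<^sub>C v"

lemma cinner_self_cnj: "cnj (cinner v v) = cinner v v"
  using cinner_commute[of v v] by simp

lemma rproj_orth:
  assumes v: "v \<noteq> 0"
  shows "orth_proj (rproj v)"
proof -
  have nz: "cinner v v \<noteq> 0" using v cinner_eq_zero_iff[of v] by simp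
  have a: "rproj v (x + y) = rproj v x + rproj v y" for x y
    by (simp add: rproj_def cinner_add_left add_divide_distrib scaleC_add_left)
  have b: "rproj v (c *\<^sub>C x) = c *\<^sub>C rproj v x" for c x
    by (simp add: rproj_def cinner_scaleC_left scaleC_scaleC)
  have c: "rproj v (rproj v x) = rproj v x" for x
    using nz by (simp add: rproj_def cinner_scaleC_left)
  have d: "cinner (rproj v x) y = cinner x (rproj v y)" for x y
  proof -
    have "cinner (rproj v x) y = cinner x v * cinner v y / cinner v v"
      by (simp add: rproj_def cinner_scaleC_left)
    moreover have "cinner x (rproj v y) = cinner x v * cinner v y / cinner v v"
      using cinner_commute[of y v] cinner_self_cnj[of v]
      by (simp add: rproj_def cinner_scaleC_right)
    ultimately show ?thesis by simp
  qed
  show ?thesis unfolding orth_proj_def using a b c d by blast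
qed

lemma rproj_scale_v: "v \<noteq> 0 \<Longrightarrow> rproj v (c *\<^sub>C v) = c *\<^sub>C v"
proof -
  assume v: "v \<noteq> 0"
  have nz: "cinner v v \<noteq> 0" using v cinner_eq_zero_iff[of v] by simp
  then show ?thesis by (simp add: rproj_def cinner_scaleC_left)
qed

lemma rproj_v: "v \<noteq> 0 \<Longrightarrow> rproj v v = v"
  using rproj_scale_v[of v 1] by (simp add: scaleC_one)

lemma rproj_form: "\<exists>c. rproj v x = c *\<^sub>C v"
  by (auto simp: rproj_def)

lemma mf_add: "orth_proj Q \<Longrightarrow> mult_factor Q (\<lambda>n. f n + g n) = (\<lambda>n. mult_factor Q f n + mult_factor Q g n)"
  by (simp add: mult_factor_def fun_eq_iff op_add op_zero algebra_simps)

lemma mf_sc: "orth_proj Q \<Longrightarrow> mult_factor Q (sc c f) = sc c (mult_factor Q f)"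
  by (simp add: mult_factor_def sc_def fun_eq_iff op_scale scaleC_add_right scaleC_diff_right)

lemma mf_bstar: "orth_proj Q \<Longrightarrow> mult_factor Q (bstar Q f) = (\<lambda>n. f n - (if n = 0 then Q (f 0) else 0))"
proof -
  assume q: "orth_proj Q"
  have e1: "Q (bstar Q f n) = Q (f (Suc n))" for n
    unfolding bstar_def by (simp only: op_add[OF q] op_perp[OF q] op_idem[OF q]) simp
  have e2: "bstar Q f n - Q (bstar Q f n) = f n - Q (f n)" for n
    unfolding e1 by (simp add: bstar_def)
  show ?thesis
  proof
    fix n
    show "mult_factor Q (bstar Q f) n = f n - (if n = 0 then Q (f 0) else 0)"
    proof (cases n)
      case 0 then show ?thesis unfolding mult_factor_def by (simp only: e2) simp
    next
      case (Suc j) then show ?thesis unfolding mult_factor_def by (simp only: e2) (simp add: e1)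
    qed
  qed
qed

lemma mf_shift: "orth_proj Q \<Longrightarrow> mult_factor Q (bshift h) = (\<lambda>n. bshift (mult_factor Q h) n - (if n = 0 then Q (h 0) else 0))"
proof
  fix n assume q: "orth_proj Q"
  show "mult_factor Q (bshift h) n = bshift (mult_factor Q h) n - (if n = 0 then Q (h 0) else 0)"
    by (cases n) (simp_all add: mult_factor_def bshift_def)
qed

lemma bstar_pow_shift: "bstar Q ((bshift ^^ k) f) = (bshift ^^ k) (bstar Q f)"
  by (induction k) (simp_all add: bstar_shift[symmetric])

lemma TS_cong: "\<forall>k\<in>{1..m}. P k = P' k \<Longrightarrow> TS P m f = TS P' m f"
  by (induction m arbitrary: f) auto

lemma TS0_cong: "\<forall>k\<in>{1..m}. P k = P' k \<Longrightarrow> TS0 P m x = TS0 P' m x"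
  by (induction m arbitrary: x) auto

lemma bshift_lin_add: "bshift (\<lambda>n. f n + g n) = (\<lambda>n. bshift f n + bshift g n)"
  by (simp add: bshift_def)

lemma bshift_lin_sc: "bshift (sc c f) = sc c (bshift f)"
  by (simp add: bshift_def sc_def)

lemma span_shift_inv: "f \<in> vs.span (Gp p) \<Longrightarrow> bshift f \<in> vs.span (Gp p)"
proof -
  assume f: "f \<in> vs.span (Gp p)"
  have "vs.span (Gp p) \<subseteq> {x. bshift x \<in> vs.span (Gp p)}"
  proof (rule span_preimage[OF bshift_lin_add bshift_lin_sc vs.subspace_span])
    fix x assume "x \<in> Gp p"
    then obtain k where "x = (bshift ^^ k) p" by (auto simp: Gp_def)
    then have "bshift x = (bshift ^^ Suc k) p" by simp
    moreover have "(bshift ^^ Suc k) p \<in> Gp p" unfolding Gp_def by (rule CollectI, rule exI[of _ "Suc k"]) simp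
    ultimately show "bshift x \<in> vs.span (Gp p)" by (simp add: vs.span_base)
  qed
  then show ?thesis using f by blast
qed

lemma span_add': "x \<in> vs.span S \<Longrightarrow> y \<in> vs.span S \<Longrightarrow> (\<lambda>n. x n + y n) \<in> vs.span S"
  using vs.span_add[of x S y] by (simp add: plus_fun_lam)

lemma span_diff': "x \<in> vs.span S \<Longrightarrow> y \<in> vs.span S \<Longrightarrow> (\<lambda>n. x n - y n) \<in> vs.span S"
proof -
  assume "x \<in> vs.span S" "y \<in> vs.span S"
  then have "x - y \<in> vs.span S" by (rule vs.span_diff)
  moreover have "x - y = (\<lambda>n. x n - y n)" by (simp add: fun_eq_iff)
  ultimately show ?thesis by simp
qed

lemma const_fun_eq: "(\<lambda>n. if n = 0 then c *\<^sub>C v else 0) = sc c (\<lambda>n. if n = 0 then v else (0::'a::complex_inner))"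
  by (simp add: fun_eq_iff sc_def)

lemma construct:
  fixes p :: "nat \<Rightarrow> 'a::complex_inner"
  shows "(\<forall>n\<ge>m. p n = 0) \<Longrightarrow> (0 < m \<Longrightarrow> p (m - 1) \<noteq> 0) \<Longrightarrow>
    \<exists>P. projs P m \<and> {f \<in> H2. TS P m f = (\<lambda>n. 0)} = vs.span (Gp p) \<and>
        {x. TS0 P m x = 0} = (if m = 0 then {0} else {c *\<^sub>C p (m - 1) | c. True})"
proof (induction m arbitrary: p)
  case 0
  have p0: "p = (\<lambda>n. 0)" using 0 by auto
  have pk: "(bshift ^^ k) p = 0" for k by (simp add: fun_eq_iff bshift_pow_apply p0)
  have G: "Gp p = {0}" by (auto simp: Gp_def pk)
  have S: "vs.span (Gp p) = {(\<lambda>n. 0)}"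
    unfolding G using vs.span_insert_0[of "{}"] by (simp add: zero_fun_lam)
  have zH: "(\<lambda>n. 0) \<in> (H2 :: (nat \<Rightarrow> 'a) set)" by (rule finsupp_H2[of 0]) simp
  show ?case
  proof (intro exI[of _ "\<lambda>k x. x"] conjI)
    show "projs (\<lambda>k x. x) 0" by (simp add: projs_def)
    show "{f \<in> H2. TS (\<lambda>k x. x) 0 f = (\<lambda>n. 0)} = vs.span (Gp p)" using S zH by auto
    show "{x. TS0 (\<lambda>k x. x) 0 x = 0} = (if 0 = 0 then {0} else {c *\<^sub>C p (0 - 1) | c. True})" by auto
  qed
next
  case (Suc m)
  have pz: "\<forall>n\<ge>Suc m. p n = 0" using Suc.prems(1) .
  define v where "v = p m"
  have v: "v \<noteq> 0" using Suc.prems(2) by (simp add: v_def)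
  define Q where "Q = rproj v"
  have q: "orth_proj Q" using rproj_orth[OF v] by (simp add: Q_def)
  have Qv: "Q v = v" using rproj_v[OF v] by (simp add: Q_def)
  define p' where "p' = bstar Q p"
  have p'1: "\<forall>n\<ge>m. p' n = 0"
  proof (intro allI impI)
    fix n assume n: "m \<le> n"
    have a: "p (Suc n) = 0" using pz n by simp
    show "p' n = 0"
    proof (cases "n = m")
      case True then show ?thesis using a by (simp add: p'_def bstar_def op_zero[OF q] Qv v_def[symmetric])
    next
      case False then have "p n = 0" using pz n by simp
      then show ?thesis using a by (simp add: p'_def bstar_def op_zero[OF q])
    qed
  qed
  have p'Q: "Q (p' (m - 1)) = v" if m: "0 < m"
  proof -
    have sm: "Suc (m - 1) = m" using m by simp
    have pv: "p (Suc (m - 1)) = v" unfolding sm by (simp add: v_def)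
    have "Q (p' (m - 1)) = Q (p (m - 1) - Q (p (m - 1))) + Q (Q v)"
      unfolding p'_def bstar_def by (simp only: op_add[OF q] pv)
    also have "\<dots> = v" by (simp add: op_perp[OF q] op_idem[OF q] Qv)
    finally show ?thesis .
  qed
  have p'2: "p' (m - 1) \<noteq> 0" if m: "0 < m"
  proof
    assume "p' (m - 1) = 0"
    then have "Q (p' (m - 1)) = 0" by (simp add: op_zero[OF q])
    then show False using p'Q[OF m] v by simp
  qed
  obtain P' where P'p: "projs P' m"
    and P'k: "{f \<in> H2. TS P' m f = (\<lambda>n. 0)} = vs.span (Gp p')"
    and P'c: "{x. TS0 P' m x = 0} = (if m = 0 then {0} else {c *\<^sub>C p' (m - 1) | c. True})"
    using Suc.IH[OF p'1 p'2] by blast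
  define P where "P k = (if k = Suc m then Q else P' k)" for k
  have agree: "\<forall>k\<in>{1..m}. P k = P' k" by (simp add: P_def)
  have projsP: "projs P (Suc m)"
    unfolding projs_def
  proof
    fix k assume k: "k \<in> {1..Suc m}"
    show "orth_proj (P k)"
    proof (cases "k = Suc m")
      case True then show ?thesis using q by (simp add: P_def)
    next
      case False then have "k \<in> {1..m}" using k by auto
      then show ?thesis using P'p False by (simp add: P_def projs_def)
    qed
  qed
  have PS: "P (Suc m) = Q" by (simp add: P_def)
  have TSeq: "TS P (Suc m) f = TS P' m (bstar Q f)" for f
    by (simp only: TS.simps PS TS_cong[OF agree])
  have TS0eq: "TS0 P (Suc m) x = TS0 P' m (x - Q x)" for x
    by (simp only: TS0.simps PS TS0_cong[OF agree])
  define V where "V = vs.span (Gp p)"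
  define V' where "V' = vs.span (Gp p')"
  have pdeg: "is_poly_deg p m" using pz v by (auto simp: is_poly_deg_def v_def)
  have VH2: "V \<subseteq> H2" unfolding V_def by (rule span_Gp_H2[OF pdeg])
  have pV: "p \<in> V" unfolding V_def
    by (rule vs.span_base) (simp add: Gp_def, rule exI[of _ 0], simp)
  have pm: "(bshift ^^ m) p = (\<lambda>n. if n = 0 then v else 0)"
  proof
    fix n show "(bshift ^^ m) p n = (if n = 0 then v else 0)"
      using pz by (simp add: bshift_pow_apply v_def)
  qed
  have pmV: "(bshift ^^ m) p \<in> V" unfolding V_def
    by (rule vs.span_base) (simp only: Gp_def, rule CollectI, rule exI[of _ m], simp)
  have constV: "(\<lambda>n. if n = 0 then Q x else 0) \<in> V" for x
  proof -
    obtain c where c: "Q x = c *\<^sub>C v" using rproj_form[of v x] by (auto simp: Q_def)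
    have "(\<lambda>n. if n = 0 then Q x else 0) = sc c ((bshift ^^ m) p)"
      unfolding c pm by (rule const_fun_eq)
    then show ?thesis using vs.span_scale pmV unfolding V_def by simp
  qed
  have mf_gen: "mult_factor Q ((bshift ^^ k) p') \<in> V" for k
  proof (induction k)
    case 0
    have "mult_factor Q p' = (\<lambda>n. p n - (if n = 0 then Q (p 0) else 0))"
      unfolding p'_def by (rule mf_bstar[OF q])
    then show ?case using span_diff'[OF pV[unfolded V_def] constV[unfolded V_def]] by (simp add: V_def)
  next
    case (Suc k)
    have sh: "bshift (mult_factor Q ((bshift ^^ k) p')) \<in> V"
      using span_shift_inv Suc.IH unfolding V_def by blast
    have "mult_factor Q ((bshift ^^ Suc k) p') = (\<lambda>n. bshift (mult_factor Q ((bshift ^^ k) p')) n - (if n = 0 then Q ((bshift ^^ k) p' 0) else 0))"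
      by (simp add: mf_shift[OF q])
    then show ?case using span_diff'[OF sh[unfolded V_def] constV[unfolded V_def]] by (simp add: V_def)
  qed
  have mfV: "mult_factor Q g \<in> V" if g: "g \<in> V'" for g
  proof -
    have "vs.span (Gp p') \<subseteq> {x. mult_factor Q x \<in> V}"
    proof (rule span_preimage[OF mf_add[OF q] mf_sc[OF q]])
      show "vs.subspace V" unfolding V_def by simp
      fix x assume "x \<in> Gp p'"
      then obtain k where "x = (bshift ^^ k) p'" by (auto simp: Gp_def)
      then show "mult_factor Q x \<in> V" using mf_gen by simp
    qed
    then show ?thesis using g unfolding V'_def by blast
  qed
  have bsV: "bstar Q f \<in> V'" if f: "f \<in> V" for f
  proof -
    have "vs.span (Gp p) \<subseteq> {x. bstar Q x \<in> V'}"
    proof (rule span_preimage[OF bstar_add[OF q] bstar_sc[OF q]])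
      show "vs.subspace V'" unfolding V'_def by simp
      fix x assume "x \<in> Gp p"
      then obtain k where k: "x = (bshift ^^ k) p" by (auto simp: Gp_def)
      have "bstar Q x = (bshift ^^ k) p'" by (simp add: k bstar_pow_shift p'_def)
      then show "bstar Q x \<in> V'" unfolding V'_def
        by (simp, intro vs.span_base) (auto simp: Gp_def)
    qed
    then show ?thesis using f unfolding V_def by blast
  qed
  have kerEq: "{f \<in> H2. TS P (Suc m) f = (\<lambda>n. 0)} = V"
  proof
    show "{f \<in> H2. TS P (Suc m) f = (\<lambda>n. 0)} \<subseteq> V"
    proof
      fix f assume "f \<in> {f \<in> H2. TS P (Suc m) f = (\<lambda>n. 0)}"
      then have fH: "f \<in> H2" and t: "TS P' m (bstar Q f) = (\<lambda>n. 0)" by (auto simp: TSeq simp del: TS.simps)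
      have "bstar Q f \<in> V'" using bstar_H2[OF q fH] t P'k unfolding V'_def by blast
      then have a: "mult_factor Q (bstar Q f) \<in> V" by (rule mfV)
      have e: "f = (\<lambda>n. mult_factor Q (bstar Q f) n + (if n = 0 then Q (f 0) else 0))"
        by (simp add: mf_bstar[OF q] fun_eq_iff)
      have "(\<lambda>n. mult_factor Q (bstar Q f) n + (if n = 0 then Q (f 0) else 0)) \<in> V"
        using span_add'[OF a[unfolded V_def] constV[of "f 0", unfolded V_def]] by (simp add: V_def)
      then show "f \<in> V" by (subst e)
    qed
  next
    show "V \<subseteq> {f \<in> H2. TS P (Suc m) f = (\<lambda>n. 0)}"
    proof
      fix f assume f: "f \<in> V"
      have "bstar Q f \<in> {f \<in> H2. TS P' m f = (\<lambda>n. 0)}" using bsV[OF f] P'k unfolding V'_def by simp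
      then show "f \<in> {f \<in> H2. TS P (Suc m) f = (\<lambda>n. 0)}" using f VH2 by (auto simp: TSeq simp del: TS.simps)
    qed
  qed
  have zK: "0 \<in> {x. TS0 P' m x = 0}"
    unfolding P'c by (auto intro: exI[of _ 0] simp: scaleC_zero_left)
  have cEq: "{x. TS0 P (Suc m) x = 0} = {c *\<^sub>C v | c. True}"
  proof
    show "{c *\<^sub>C v | c. True} \<subseteq> {x. TS0 P (Suc m) x = 0}"
    proof
      fix x assume "x \<in> {c *\<^sub>C v | c. True}"
      then obtain c where c: "x = c *\<^sub>C v" by auto
      have "x - Q x = 0" using rproj_scale_v[OF v, of c] by (simp add: c Q_def)
      then show "x \<in> {x. TS0 P (Suc m) x = 0}" using zK by (simp add: TS0eq del: TS0.simps)
    qed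
  next
    show "{x. TS0 P (Suc m) x = 0} \<subseteq> {c *\<^sub>C v | c. True}"
    proof
      fix x assume "x \<in> {x. TS0 P (Suc m) x = 0}"
      then have k: "x - Q x \<in> {x. TS0 P' m x = 0}" by (simp add: TS0eq del: TS0.simps)
      have z: "x - Q x = 0"
      proof (cases "m = 0")
        case True then show ?thesis using k P'c by simp
      next
        case False
        then obtain c where c: "x - Q x = c *\<^sub>C p' (m - 1)" using k P'c by auto
        have "Q (x - Q x) = c *\<^sub>C v" using p'Q[of] False by (simp add: c op_scale[OF q])
        then have "c *\<^sub>C v = 0" by (simp add: op_perp[OF q])
        then have "c = 0" using v scaleC_eq_0_iff[of c v] by simp
        then show ?thesis using c by simp
      qed
      obtain d where d: "Q x = d *\<^sub>C v" using rproj_form[of v x] by (auto simp: Q_def)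
      have "x = d *\<^sub>C v" using z d by simp
      then show "x \<in> {c *\<^sub>C v | c. True}" by blast
    qed
  qed
  show ?case
    using projsP kerEq cEq unfolding V_def v_def by (intro exI[of _ P]) simp
qed

lemma bshift_H2: "f \<in> H2 \<Longrightarrow> bshift f \<in> H2"
  using summable_Suc_iff[of "\<lambda>n. (norm (f n))\<^sup>2"] by (simp add: H2_iff bshift_def)

lemma ii_to_i:
  fixes F :: "(nat \<Rightarrow> 'a::complex_inner) set"
  assumes p: "projs P (Suc N)"
    and F: "F = {f \<in> H2. TS P (Suc N) f = (\<lambda>n. 0)}"
    and dim: "seq_cdim_eq F (Suc N)"
    and K: "{x. TS0 P (Suc N) x = 0} \<subseteq> {c *\<^sub>C v | c. True}"
    and cs: "h2_closed_subspace F"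
  shows "\<exists>p. is_poly_deg p N \<and> F = E p"
proof -
  have Fs: "vs.subspace F" by (rule subspace_closed[OF cs])
  have clF: "h2_closure F = F" using cs by (simp add: h2_closed_subspace_def)
  obtain B where B: "finite B" "card B = Suc N" "B \<subseteq> F" "vs.independent B" "vs.span B = F"
    using dim by (auto simp: seq_cdim_eq_def seq_cindependent_eq seq_cspan_eq)
  have Fdeg: "\<forall>n\<ge>Suc N. f n = 0" if f: "f \<in> F" for f
  proof -
    have "\<forall>n\<ge>0. TS P (Suc N) f n = 0" using f F by auto
    from TS_vanish[OF p this] show ?thesis by simp
  qed
  have Fshift: "bshift f \<in> F" if f: "f \<in> F" for f
    using f F bshift_H2 TS_shift[of P "Suc N" f] by (auto simp: bshift_def)
  have Fshiftn: "(bshift ^^ k) f \<in> F" if f: "f \<in> F" for f k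
    by (induction k) (simp_all add: f Fshift)
  have Fconst: "\<exists>c. x = c *\<^sub>C v" if x: "(\<lambda>n. if n = 0 then x else 0) \<in> F" for x
  proof -
    have "TS P (Suc N) (\<lambda>n. if n = 0 then x else 0) = (\<lambda>n. 0)" using x F by auto
    then have "TS0 P (Suc N) x = 0" using TS_const[OF p, of x] by (metis (mono_tags, lifting))
    then show ?thesis using K by auto
  qed
  have topc: "\<exists>c. f k = c *\<^sub>C v" if f: "f \<in> F" "\<forall>n\<ge>Suc k. f n = 0" for f k
  proof -
    have "(bshift ^^ k) f = (\<lambda>n. if n = 0 then f k else 0)"
    proof
      fix n show "(bshift ^^ k) f n = (if n = 0 then f k else 0)"
        using f(2) by (simp add: bshift_pow_apply)
    qed
    then show ?thesis using Fconst Fshiftn[OF f(1), of k] by metis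
  qed
  have Fk: "\<exists>W. finite W \<and> card W \<le> k \<and> {f \<in> F. \<forall>n\<ge>k. f n = 0} \<subseteq> vs.span W" for k
  proof (induction k)
    case 0
    have "{f \<in> F. \<forall>n\<ge>0. f n = 0} \<subseteq> vs.span {}" by (auto simp: zero_fun_lam)
    then show ?case by (intro exI[of _ "{}"]) simp
  next
    case (Suc k)
    obtain W where W: "finite W" "card W \<le> k" "{f \<in> F. \<forall>n\<ge>k. f n = 0} \<subseteq> vs.span W"
      using Suc.IH by blast
    show ?case
    proof (cases "\<exists>w\<in>F. (\<forall>n\<ge>Suc k. w n = 0) \<and> w k \<noteq> 0")
      case False
      have "{f \<in> F. \<forall>n\<ge>Suc k. f n = 0} \<subseteq> {f \<in> F. \<forall>n\<ge>k. f n = 0}"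
      proof
        fix f assume f: "f \<in> {f \<in> F. \<forall>n\<ge>Suc k. f n = 0}"
        then have fk: "f k = 0" using False by auto
        have "\<forall>n\<ge>k. f n = 0"
        proof (intro allI impI)
          fix n assume "k \<le> n"
          then show "f n = 0" using fk f by (cases "n = k") auto
        qed
        then show "f \<in> {f \<in> F. \<forall>n\<ge>k. f n = 0}" using f by simp
      qed
      then show ?thesis using W by (intro exI[of _ W]) auto
    next
      case True
      then obtain w where w: "w \<in> F" "\<forall>n\<ge>Suc k. w n = 0" "w k \<noteq> 0" by blast
      obtain b where b: "w k = b *\<^sub>C v" using topc[OF w(1,2)] by blast
      have bnz: "b \<noteq> 0" using w(3) b by (cases "b = 0") auto
      have sub: "{f \<in> F. \<forall>n\<ge>Suc k. f n = 0} \<subseteq> vs.span (insert w W)"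
      proof
        fix f assume f: "f \<in> {f \<in> F. \<forall>n\<ge>Suc k. f n = 0}"
        then have fF: "f \<in> F" and fz: "\<forall>n\<ge>Suc k. f n = 0" by auto
        obtain a where a: "f k = a *\<^sub>C v" using topc[OF fF fz] by blast
        define h where "h = f - sc (a / b) w"
        have hF: "h \<in> F" unfolding h_def
          by (rule vs.subspace_diff[OF Fs fF vs.subspace_scale[OF Fs w(1)]])
        have hz: "\<forall>n\<ge>k. h n = 0"
        proof (intro allI impI)
          fix n assume n: "k \<le> n"
          show "h n = 0"
          proof (cases "n = k")
            case True
            have "(a / b) *\<^sub>C (b *\<^sub>C v) = a *\<^sub>C v" using bnz by (simp add: scaleC_scaleC)
            then show ?thesis using True a b by (simp add: h_def sc_def)
          next
            case False
            then have "n \<ge> Suc k" using n by simp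
            then show ?thesis using fz w(2) by (simp add: h_def sc_def)
          qed
        qed
        have "h \<in> vs.span W" using W(3) hF hz by blast
        then have h1: "h \<in> vs.span (insert w W)" using vs.span_mono[of W "insert w W"] by blast
        have h2: "sc (a / b) w \<in> vs.span (insert w W)" by (intro vs.span_scale vs.span_base) simp
        have "f = h + sc (a / b) w" by (simp add: h_def)
        then show "f \<in> vs.span (insert w W)" using vs.span_add[OF h1 h2] by simp
      qed
      have "card (insert w W) \<le> Suc k" using W(1,2) card_insert_le_m1 by (simp add: card_insert_if)
      then show ?thesis using W(1) sub by (intro exI[of _ "insert w W"]) simp
    qed
  qed
  have "\<exists>f\<in>F. f N \<noteq> 0"
  proof (rule ccontr)
    assume "\<not> (\<exists>f\<in>F. f N \<noteq> 0)"
    then have all: "\<forall>f\<in>F. f N = 0" by blast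
    obtain W where W: "finite W" "card W \<le> N" "{f \<in> F. \<forall>n\<ge>N. f n = 0} \<subseteq> vs.span W"
      using Fk by blast
    have "F \<subseteq> {f \<in> F. \<forall>n\<ge>N. f n = 0}"
    proof
      fix f assume f: "f \<in> F"
      have "\<forall>n\<ge>N. f n = 0"
      proof (intro allI impI)
        fix n assume n: "N \<le> n"
        show "f n = 0" using all f Fdeg[OF f] n by (cases "n = N") auto
      qed
      then show "f \<in> {f \<in> F. \<forall>n\<ge>N. f n = 0}" using f by simp
    qed
    then have "B \<subseteq> vs.span W" using B(3) W(3) by blast
    then have "card B \<le> card W" using vs.independent_span_bound[OF W(1) B(4)] by simp
    then show False using B(2) W(2) by simp
  qed
  then obtain p where pF: "p \<in> F" and pN: "p N \<noteq> 0" by blast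
  have pdeg: "is_poly_deg p N" using pN Fdeg[OF pF] by (auto simp: is_poly_deg_def)
  have GF: "vs.span (Gp p) \<subseteq> F"
    by (rule vs.span_minimal[OF _ Fs]) (auto simp: Gp_def Fshiftn[OF pF])
  have D: "vs.independent (Dp N p)" "card (Dp N p) = Suc N" using indep_Dp[OF pdeg] by auto
  have FD: "F \<subseteq> vs.span (Dp N p)"
  proof
    fix x assume xF: "x \<in> F"
    show "x \<in> vs.span (Dp N p)"
    proof (rule ccontr)
      assume nx: "x \<notin> vs.span (Dp N p)"
      then have nx2: "x \<notin> Dp N p" using vs.span_superset by blast
      have ind: "vs.independent (insert x (Dp N p))" using D(1) nx nx2 by (simp add: vs.independent_insert)
      have "insert x (Dp N p) \<subseteq> vs.span B"
        using xF B(5) Dp_finite GF vs.span_superset[of "Gp p"] by (auto simp: Dp_def Gp_def)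
      then have "card (insert x (Dp N p)) \<le> card B" using vs.independent_span_bound[OF B(1) ind] by simp
      then show False using D(2) B(2) nx2 Dp_finite[of N p] by simp
    qed
  qed
  have "vs.span (Gp p) = F" using GF FD Gp_span[OF pdeg] by blast
  then have "E p = F" by (simp add: E_Gp clF)
  then show ?thesis using pdeg by blast
qed

lemma closure_sup: "A \<subseteq> H2 \<Longrightarrow> A \<subseteq> h2_closure A"
proof
  fix f assume A: "A \<subseteq> H2" and f: "f \<in> A"
  have "h2norm (\<lambda>n. f n - f n) = 0" by (simp add: h2norm_def)
  then show "f \<in> h2_closure A" using A f by (auto simp: h2_closure_def intro!: bexI[of _ f])
qed

lemma single_indep: "v \<noteq> 0 \<Longrightarrow> cindependent {v}"
  unfolding cindependent_def
proof (intro allI impI ballI)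
  fix T c u assume v: "v \<noteq> 0" and h: "finite T \<and> T \<subseteq> {v} \<and> (\<Sum>v\<in>T. c v *\<^sub>C v) = 0" and u: "u \<in> T"
  then have T: "T = {v}" by auto
  then have "c v *\<^sub>C v = 0" using h by simp
  then show "c u = 0" using v u T scaleC_eq_0_iff[of "c v" v] by simp
qed

lemma single_span: "cspan {v} = {c *\<^sub>C v | c. True}"
proof
  show "cspan {v} \<subseteq> {c *\<^sub>C v | c. True}"
  proof
    fix x assume "x \<in> cspan {v}"
    then obtain T c where h: "finite T" "T \<subseteq> {v}" "x = (\<Sum>v\<in>T. c v *\<^sub>C v)" by (auto simp: cspan_def)
    show "x \<in> {c *\<^sub>C v | c. True}"
    proof (cases "T = {}")
      case True then have "x = 0 *\<^sub>C v" using h by simp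
      then show ?thesis by blast
    next
      case False then have "T = {v}" using h by auto
      then have "x = c v *\<^sub>C v" using h by simp
      then show ?thesis by blast
    qed
  qed
next
  show "{c *\<^sub>C v | c. True} \<subseteq> cspan {v}"
  proof
    fix x assume "x \<in> {c *\<^sub>C v | c. True}"
    then obtain c where c: "x = c *\<^sub>C v" by blast
    show "x \<in> cspan {v}" unfolding cspan_def
      by (rule CollectI, rule exI[of _ "{v}"], rule exI[of _ "\<lambda>_. c"]) (simp add: c)
  qed
qed

theorem mainTheorem7:
  fixes F :: "(nat \<Rightarrow> 'x::{complex_inner, complete_space}) set" and N :: nat
  assumes "separable_space_ax TYPE('x)"
    and "h2_closed_subspace F"
  shows "(\<exists>p. is_poly_deg p N \<and> F = E p) \<longleftrightarrow>
         (seq_cdim_eq F (N + 1) \<and>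
          (\<exists>P. (\<forall>k\<in>{1..N+1}. orth_proj (P k)) \<and>
               F = h2_orth_compl (Theta_mult P N ` H2) \<and>
               cdim_eq {x. adjoint (Theta0 P N) x = 0} 1))"
proof
  assume "\<exists>p. is_poly_deg p N \<and> F = E p"
  then obtain p where pd: "is_poly_deg p N" and FE: "F = E p" by blast
  have a1: "\<forall>n\<ge>Suc N. p n = 0" using pd by (auto simp: is_poly_deg_def)
  have a2: "p (Suc N - 1) \<noteq> 0" using pd by (simp add: is_poly_deg_def)
  obtain P where Pp: "projs P (Suc N)"
    and Pk: "{f \<in> H2. TS P (Suc N) f = (\<lambda>n. 0)} = vs.span (Gp p)"
    and Pc: "{x. TS0 P (Suc N) x = 0} = {c *\<^sub>C p N | c. True}"
    using construct[OF a1 a2] by auto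
  have FV: "F = vs.span (Gp p)"
  proof -
    have "E p = h2_closure {f \<in> H2. TS P (Suc N) f = (\<lambda>n. 0)}" unfolding E_Gp Pk[symmetric] ..
    moreover have "h2_closure {f \<in> H2. TS P (Suc N) f = (\<lambda>n. 0)} = {f \<in> H2. TS P (Suc N) f = (\<lambda>n. 0)}"
      using closed_ker[OF Pp] closure_sup[of "{f \<in> H2. TS P (Suc N) f = (\<lambda>n. 0)}"] by auto
    ultimately show ?thesis using FE Pk by (simp del: TS.simps)
  qed
  have D: "vs.independent (Dp N p)" "card (Dp N p) = Suc N" using indep_Dp[OF pd] by auto
  have dim: "seq_cdim_eq F (N + 1)"
    unfolding seq_cdim_eq_def seq_cindependent_eq seq_cspan_eq
  proof (intro exI[of _ "Dp N p"] conjI)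
    show "finite (Dp N p)" by (rule Dp_finite)
    show "card (Dp N p) = N + 1" using D by simp
    show "Dp N p \<subseteq> F" unfolding FV using vs.span_superset[of "Gp p"] by (auto simp: Dp_def Gp_def)
    show "vs.independent (Dp N p)" by (rule D(1))
    show "vs.span (Dp N p) = F" using FV Gp_span[OF pd] by simp
  qed
  have orth: "\<forall>k\<in>{1..N+1}. orth_proj (P k)" using Pp by (simp add: projs_def)
  have oc: "F = h2_orth_compl (Theta_mult P N ` H2)"
    unfolding Theta_mult_ThM orth_compl_eq[OF Pp] using FV Pk by simp
  have pN: "p N \<noteq> 0" using pd by (simp add: is_poly_deg_def)
  have mem: "\<exists>c. p N = c *\<^sub>C p N" by (rule exI[of _ 1]) (simp add: scaleC_one)
  have cd: "cdim_eq {x. adjoint (Theta0 P N) x = 0} 1"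
    unfolding adjoint_Theta0[OF Pp] Pc cdim_eq_def
    by (intro exI[of _ "{p N}"]) (simp add: single_indep[OF pN] single_span mem)
  show "seq_cdim_eq F (N + 1) \<and>
          (\<exists>P. (\<forall>k\<in>{1..N+1}. orth_proj (P k)) \<and>
               F = h2_orth_compl (Theta_mult P N ` H2) \<and>
               cdim_eq {x. adjoint (Theta0 P N) x = 0} 1)"
    using dim orth oc cd by blast
next
  assume h: "seq_cdim_eq F (N + 1) \<and>
          (\<exists>P. (\<forall>k\<in>{1..N+1}. orth_proj (P k)) \<and>
               F = h2_orth_compl (Theta_mult P N ` H2) \<and>
               cdim_eq {x. adjoint (Theta0 P N) x = 0} 1)"
  then obtain P where orth: "\<forall>k\<in>{1..N+1}. orth_proj (P k)"
    and oc: "F = h2_orth_compl (Theta_mult P N ` H2)"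
    and cd: "cdim_eq {x. adjoint (Theta0 P N) x = 0} 1" by blast
  have dim: "seq_cdim_eq F (Suc N)" using h by simp
  have Pp: "projs P (Suc N)" using orth by (simp add: projs_def)
  have FK: "F = {f \<in> H2. TS P (Suc N) f = (\<lambda>n. 0)}"
    using oc unfolding Theta_mult_ThM orth_compl_eq[OF Pp] .
  obtain B where B: "finite B" "card B = 1" "cspan B = {x. TS0 P (Suc N) x = 0}"
    using cd unfolding cdim_eq_def adjoint_Theta0[OF Pp] by blast
  obtain v where "B = {v}" using B(2) card_1_singletonE by blast
  then have K: "{x. TS0 P (Suc N) x = 0} \<subseteq> {c *\<^sub>C v | c. True}" using B(3) single_span[of v] by (simp del: TS0.simps)
  show "\<exists>p. is_poly_deg p N \<and> F = E p"
    by (rule ii_to_i[OF Pp FK dim K assms(2)])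
qed

end
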